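(* Let $\Omega=[0,2\pi]^2$, $s>1$, $u\in H_p^{s+2}(\Omega)$, $N>2$ even, and $u^*=P_{N-2}u$. Then $$\|\Delta_h(\bm u^*-\bm u)\|_h\le CN^{-s}|u|_{s+2},$$ where $\bm u^*,\bm u\in\mathbb V_h$ are the grid values of $u^*,u$ and $C$ is independent of $N$ and $u$.
   Context: $H_p^s(\Omega)$: closure in $H^s(\Omega)$ of smooth $2\pi$-periodic (in $x$ and $y$) functions, with semi-norm $|\cdot|_s$. $S_N=\mathrm{span}\{e^{\mathrm i(j_1x+j_2y)}:|j_1|,|j_2|\le N/2\}$ and $P_N:L^2(\Omega)\to S_N$ the $L^2$-orthogonal projection. Grid: $h=2\pi/N$, $x_j=y_j=jh$, $0\le j\le N-1$; $\mathbb V_h$ the space of doubly periodic grid functions, $\langle\bm U,\bm V\rangle_h=h^2\sum_{j_1,j_2}U_{j_1,j_2}V_{j_1,j_2}$, $\|\bm U\|_h^2=\langle\bm U,\bm U\rangle_h$, $\Delta_hU_{j_1,j_2}=(U_{j_1+1,j_2}+U_{j_1-1,j_2}+U_{j_1,j_2+1}+U_{j_1,j_2-1}-4U_{j_1,j_2})/h^2$ (indices periodic). *)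

theory Defs
  imports "HOL-Analysis.Analysis"
begin

text \<open>Periodic functions on Omega = [0,2pi]^2 are represented by their Fourier
  coefficients c :: int \<times> int \<Rightarrow> complex, u(x,y) = sum_k c k * e^{i(k1 x + k2 y)}.\<close>

definition fourier_fun :: "(int \<times> int \<Rightarrow> complex) \<Rightarrow> real \<Rightarrow> real \<Rightarrow> complex" where
  "fourier_fun c x y =
     (\<Sum>\<^sub>\<infinity>k. c k * exp (\<i> * complex_of_real (real_of_int (fst k) * x + real_of_int (snd k) * y)))"

definition freq_norm2 :: "int \<times> int \<Rightarrow> real" where
  "freq_norm2 k = real_of_int (fst k)^2 + real_of_int (snd k)^2"

definition in_Hp :: "real \<Rightarrow> (int \<times> int \<Rightarrow> complex) \<Rightarrow> bool" where
  "in_Hp s c \<longleftrightarrow> (\<lambda>k. (1 + freq_norm2 k) powr s * (cmod (c k))^2) summable_on UNIV"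

text \<open>The H^s semi-norm |u|_s (L^2 norm of the s-th derivatives, in Fourier form).\<close>
definition Hp_semi :: "real \<Rightarrow> (int \<times> int \<Rightarrow> complex) \<Rightarrow> real" where
  "Hp_semi s c = sqrt (4 * pi^2 * (\<Sum>\<^sub>\<infinity>k. (freq_norm2 k) powr s * (cmod (c k))^2))"

text \<open>L^2-orthogonal projection P_N onto S_N = span{e^{i(j1 x+j2 y)} : |j1|,|j2| \<le> N/2}.\<close>
definition proj_N :: "nat \<Rightarrow> (int \<times> int \<Rightarrow> complex) \<Rightarrow> (int \<times> int \<Rightarrow> complex)" where
  "proj_N N c = (\<lambda>k. if real_of_int \<bar>fst k\<bar> \<le> real N / 2 \<and> real_of_int \<bar>snd k\<bar> \<le> real N / 2
                      then c k else 0)"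

definition mesh :: "nat \<Rightarrow> real" where
  "mesh N = 2 * pi / real N"

definition grid_vals :: "nat \<Rightarrow> (real \<Rightarrow> real \<Rightarrow> complex) \<Rightarrow> nat \<Rightarrow> nat \<Rightarrow> complex" where
  "grid_vals N u j1 j2 = u (real j1 * mesh N) (real j2 * mesh N)"

definition lap_h :: "nat \<Rightarrow> (nat \<Rightarrow> nat \<Rightarrow> complex) \<Rightarrow> nat \<Rightarrow> nat \<Rightarrow> complex" where
  "lap_h N U j1 j2 =
     (U ((j1 + 1) mod N) j2 + U ((j1 + N - 1) mod N) j2
      + U j1 ((j2 + 1) mod N) + U j1 ((j2 + N - 1) mod N) - 4 * U j1 j2)
     / complex_of_real ((mesh N)^2)"

definition norm_h :: "nat \<Rightarrow> (nat \<Rightarrow> nat \<Rightarrow> complex) \<Rightarrow> real" where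
  "norm_h N U = sqrt ((mesh N)^2 * (\<Sum>j1<N. \<Sum>j2<N. (cmod (U j1 j2))^2))"

end

theory Submission
  imports Defs
begin

definition fz :: "int \<Rightarrow> real" where "fz n = 1 / (1 + real_of_int \<bar>n\<bar>)^2"

lemma fz_nonneg: "fz n \<ge> 0" by (simp add: fz_def)

lemma fz_interval: "(\<Sum>n\<in>{-int M..int M}. fz n) \<le> 3 - 2 / (real M + 1)"
proof (induction M)
  case 0 then show ?case by (simp add: fz_def)
next
  case (Suc M)
  have eq: "{-int (Suc M)..int (Suc M)} = insert (int M + 1) (insert (-(int M + 1)) {-int M..int M})"
    by auto
  have "(\<Sum>n\<in>{-int (Suc M)..int (Suc M)}. fz n) = fz (int M + 1) + fz (-(int M + 1)) + (\<Sum>n\<in>{-int M..int M}. fz n)"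
    unfolding eq by (simp add: add.assoc)
  also have "\<dots> \<le> 2 / (real M + 2)^2 + (3 - 2 / (real M + 1))"
  proof -
    have "fz (int M + 1) + fz (-(int M+1)) = 2/(real M + 2)^2" by (simp add: fz_def add.commute)
    then show ?thesis using Suc by linarith
  qed
  also have "\<dots> \<le> 3 - 2 / (real (Suc M) + 1)"
  proof -
    have "1 / (real M + 2)^2 \<le> 1 / (real M + 1) - 1 / (real M + 2)"
    proof -
      have "1 / (real M + 2)^2 \<le> 1 / ((real M + 1) * (real M + 2))"
        by (rule divide_left_mono) (auto simp: power2_eq_square)
      also have "\<dots> = 1 / (real M + 1) - 1 / (real M + 2)" by (simp add: field_simps)
      finally show ?thesis .
    qed
    moreover have "2 / (real (Suc M) + 1) = 2*(1/(real M + 2))" by simp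
    moreover have "2 / (real M + 2)^2 = 2*(1/(real M+2)^2)" by simp
    moreover have "2/(real M+1) = 2*(1/(real M+1))" by simp
    ultimately show ?thesis by linarith
  qed
  finally show ?case .
qed

lemma fz_sum_le: assumes "finite A" shows "(\<Sum>n\<in>A. fz n) \<le> 3"
proof -
  define M where "M = nat (Max (insert 0 (abs ` A)))"
  have sub: "A \<subseteq> {-int M..int M}"
  proof
    fix n assume "n \<in> A"
    then have "\<bar>n\<bar> \<le> Max (insert 0 (abs ` A))" using assms by (intro Max_ge) auto
    then show "n \<in> {-int M..int M}" unfolding M_def by auto
  qed
  have "(\<Sum>n\<in>A. fz n) \<le> (\<Sum>n\<in>{-int M..int M}. fz n)"
    by (rule sum_mono2) (use sub fz_nonneg in auto)
  also have "\<dots> \<le> 3 - 2 / (real M + 1)" by (rule fz_interval)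
  also have "\<dots> \<le> 3" by simp
  finally show ?thesis .
qed

lemma fz2_sum_le: assumes "finite B" shows "(\<Sum>m\<in>B. fz (fst m) * fz (snd m)) \<le> 9"
proof -
  have "(\<Sum>m\<in>B. fz (fst m) * fz (snd m)) \<le> (\<Sum>m\<in>fst ` B \<times> snd ` B. fz (fst m) * fz (snd m))"
  proof (rule sum_mono2)
    show "B \<subseteq> fst ` B \<times> snd ` B" by force
  qed (use assms fz_nonneg in \<open>auto intro!: mult_nonneg_nonneg\<close>)
  also have "\<dots> = (\<Sum>a\<in>fst ` B. fz a) * (\<Sum>b\<in>snd ` B. fz b)"
    by (simp add: sum_product sum.cartesian_product case_prod_unfold)
  also have "\<dots> \<le> 3 * 3"
    by (rule mult_mono) (use assms fz_sum_le in \<open>auto intro: sum_nonneg fz_nonneg\<close>)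
  finally show ?thesis by simp
qed

definition inS :: "nat \<Rightarrow> int \<times> int \<Rightarrow> bool" where
  "inS N k \<longleftrightarrow> real_of_int \<bar>fst k\<bar> \<le> real (N - 2) / 2 \<and> real_of_int \<bar>snd k\<bar> \<le> real (N - 2) / 2"

definition kcong :: "nat \<Rightarrow> int \<times> int \<Rightarrow> int \<times> int \<Rightarrow> bool" where
  "kcong N k k' \<longleftrightarrow> int N dvd (fst k - fst k') \<and> int N dvd (snd k - snd k')"

lemma out_big:
  assumes "N > 2" "even N" "\<not> inS N k"
  shows "int N \<le> 2 * max \<bar>fst k\<bar> \<bar>snd k\<bar>"
proof -
  obtain q where q: "N = 2 * q" using assms(2) by blast
  have "real (N - 2) = real N - 2" using assms(1) by simp
  then have "\<bar>fst k\<bar> > int q - 1 \<or> \<bar>snd k\<bar> > int q - 1"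
    using assms(3) q unfolding inS_def by auto
  then show ?thesis using q by auto
qed

lemma pt_bound:
  fixes a :: real and N :: nat and k' :: "int \<times> int" and r m :: "int \<times> int"
  assumes N: "N > 2" "even N" and out: "\<not> inS N k'" and a: "a \<ge> 2"
    and r1: "2 * \<bar>fst r\<bar> \<le> int N" and r2: "2 * \<bar>snd r\<bar> \<le> int N"
    and k1: "fst k' = fst r + int N * fst m" and k2: "snd k' = snd r + int N * snd m"
  shows "1 / (freq_norm2 k' powr a) \<le> 16 * (real N / 2) powr (- (2 * a)) * (fz (fst m) * fz (snd m))"
proof -
  define Mx where "Mx = real_of_int (max \<bar>fst k'\<bar> \<bar>snd k'\<bar>)"
  define t where "t = 2 * Mx / real N"
  have Npos: "real N > 0" using N by simp
  have Mx_ge: "real N \<le> 2 * Mx" using out_big[OF N out] unfolding Mx_def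
    by (metis of_int_le_iff of_int_mult of_int_numeral of_int_of_nat_eq)
  have t1: "t \<ge> 1" using Mx_ge Npos by (simp add: t_def field_simps)
  have Mxt: "Mx = (real N / 2) * t" using Npos by (simp add: t_def)
  have mi: "1 + real_of_int \<bar>fst m\<bar> \<le> 2 * t" "1 + real_of_int \<bar>snd m\<bar> \<le> 2 * t"
  proof -
    have "int N * \<bar>fst m\<bar> \<le> \<bar>fst k'\<bar> + \<bar>fst r\<bar>" using k1 by (simp add: abs_mult)
    then have "int N * (2 * \<bar>fst m\<bar>) \<le> 2 * max \<bar>fst k'\<bar> \<bar>snd k'\<bar> + int N" using r1 by linarith
    then have "real_of_int (int N * (2 * \<bar>fst m\<bar>)) \<le> real_of_int (2 * max \<bar>fst k'\<bar> \<bar>snd k'\<bar> + int N)"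
      by (simp only: of_int_le_iff)
    then have "real N * (2 * real_of_int \<bar>fst m\<bar>) \<le> 2 * Mx + real N" unfolding Mx_def by simp
    then have "real N * (2 * real_of_int \<bar>fst m\<bar>) \<le> real N * t + real N" using Npos by (simp add: t_def)
    then have "2 * real_of_int \<bar>fst m\<bar> \<le> t + 1" using Npos
      by (metis distrib_left mult_cancel_left1 mult_le_cancel_left_pos)
    then show "1 + real_of_int \<bar>fst m\<bar> \<le> 2 * t" using t1 by linarith
  next
    have "int N * \<bar>snd m\<bar> \<le> \<bar>snd k'\<bar> + \<bar>snd r\<bar>" using k2 by (simp add: abs_mult)
    then have "int N * (2 * \<bar>snd m\<bar>) \<le> 2 * max \<bar>fst k'\<bar> \<bar>snd k'\<bar> + int N" using r2 by linarith
    then have "real_of_int (int N * (2 * \<bar>snd m\<bar>)) \<le> real_of_int (2 * max \<bar>fst k'\<bar> \<bar>snd k'\<bar> + int N)"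
      by (simp only: of_int_le_iff)
    then have "real N * (2 * real_of_int \<bar>snd m\<bar>) \<le> 2 * Mx + real N" unfolding Mx_def by simp
    then have "real N * (2 * real_of_int \<bar>snd m\<bar>) \<le> real N * t + real N" using Npos by (simp add: t_def)
    then have "2 * real_of_int \<bar>snd m\<bar> \<le> t + 1" using Npos
      by (metis distrib_left mult_cancel_left1 mult_le_cancel_left_pos)
    then show "1 + real_of_int \<bar>snd m\<bar> \<le> 2 * t" using t1 by linarith
  qed
  have prodb: "((1 + real_of_int \<bar>fst m\<bar>)^2 * (1 + real_of_int \<bar>snd m\<bar>)^2) \<le> 16 * t^4"
  proof -
    have "((1 + real_of_int \<bar>fst m\<bar>)^2 * (1 + real_of_int \<bar>snd m\<bar>)^2) \<le> (2*t)^2 * (2*t)^2"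
      by (intro mult_mono power_mono mi) auto
    also have "\<dots> = 16 * t^4" by (simp add: power2_eq_square power4_eq_xxxx)
    finally show ?thesis .
  qed
  have fzb: "1 / (16 * t^4) \<le> fz (fst m) * fz (snd m)"
    unfolding fz_def using prodb
    by (simp add: divide_simps)
  have freq_ge: "freq_norm2 k' \<ge> Mx^2"
    unfolding freq_norm2_def Mx_def by (auto simp: max_def)
  have Mx_pos: "Mx > 0" using Mx_ge Npos by linarith
  have "freq_norm2 k' powr a \<ge> (Mx^2) powr a"
    by (rule powr_mono2) (use a freq_ge Mx_pos in auto)
  also have "(Mx^2) powr a = Mx powr (2*a)"
  proof -
    have "Mx^2 = Mx powr 2" using Mx_pos by (simp add: powr_numeral)
    then show ?thesis by (simp add: powr_powr)
  qed
  also have "\<dots> = (real N / 2) powr (2*a) * t powr (2*a)"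
    unfolding Mxt using Npos t1 by (subst powr_mult) auto
  finally have W: "(real N / 2) powr (2*a) * t powr (2*a) \<le> freq_norm2 k' powr a" .
  have "t^4 = t powr 4" using t1 by (simp add: powr_numeral)
  also have "\<dots> \<le> t powr (2*a)" by (rule powr_mono) (use a t1 in auto)
  finally have t4: "t^4 \<le> t powr (2*a)" .
  have NP: "(real N / 2) powr (2*a) > 0" using Npos by simp
  have "(real N / 2) powr (2*a) * t^4 \<le> freq_norm2 k' powr a"
    using order_trans[OF mult_left_mono[OF t4 less_imp_le[OF NP]] W] .
  moreover have "(real N / 2) powr (2*a) * t^4 > 0" using NP t1 by simp
  ultimately have "1 / (freq_norm2 k' powr a) \<le> 1 / ((real N / 2) powr (2*a) * t^4)"
    by (intro divide_left_mono) (auto intro!: mult_pos_pos)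
  also have "\<dots> = 16 * (real N / 2) powr (- (2 * a)) * (1 / (16 * t^4))"
    using NP by (simp add: powr_minus field_simps)
  also have "\<dots> \<le> 16 * (real N / 2) powr (- (2 * a)) * (fz (fst m) * fz (snd m))"
    by (rule mult_left_mono[OF fzb]) simp
  finally show ?thesis .
qed

lemma class_bound:
  fixes a :: real and N :: nat and k :: "int \<times> int"
  assumes N: "N > 2" "even N" and a: "a \<ge> 2" and G: "finite G" and out: "\<And>k'. k' \<in> G \<Longrightarrow> \<not> inS N k'"
  shows "(\<Sum>k'\<in>{k'\<in>G. kcong N k k'}. 1 / (freq_norm2 k' powr a)) \<le> 144 * (real N / 2) powr (- (2 * a))"
proof -
  define h where "h = int N div 2"
  have h2: "int N = 2 * h" using N(2) unfolding h_def by (metis dvd_mult_div_cancel even_of_nat)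
  define rr where "rr = (\<lambda>x::int. (x + h) mod int N - h)"
  have Npos: "int N > 0" using N by simp
  have rr_b: "2 * \<bar>rr x\<bar> \<le> int N" for x
  proof -
    have "0 \<le> (x + h) mod int N" "(x + h) mod int N < int N" using Npos by auto
    then show ?thesis unfolding rr_def using h2 by (smt (verit))
  qed
  have rr_c: "int N dvd (x - rr x)" for x
  proof -
    have "x - rr x = int N * ((x + h) div int N)" unfolding rr_def
      by (metis add_diff_cancel_right diff_diff_eq2 minus_mod_eq_mult_div)
    then show ?thesis by simp
  qed
  define r where "r = (rr (fst k), rr (snd k))"
  define mf where "mf = (\<lambda>k'::int\<times>int. ((fst k' - fst r) div int N, (snd k' - snd r) div int N))"
  define Cl where "Cl = {k'\<in>G. kcong N k k'}"
  have rep: "fst k' = fst r + int N * fst (mf k') \<and> snd k' = snd r + int N * snd (mf k')" if "k' \<in> Cl" for k'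
  proof -
    have d1: "int N dvd (fst k - fst k')" "int N dvd (snd k - snd k')" using that unfolding Cl_def kcong_def by auto
    have "int N dvd (fst k' - fst r)"
    proof -
      have "fst k' - fst r = (fst k - fst r) - (fst k - fst k')" by simp
      then show ?thesis using rr_c[of "fst k"] d1(1) unfolding r_def by (metis dvd_diff fst_conv)
    qed
    moreover have "int N dvd (snd k' - snd r)"
    proof -
      have "snd k' - snd r = (snd k - snd r) - (snd k - snd k')" by simp
      then show ?thesis using rr_c[of "snd k"] d1(2) unfolding r_def by (metis dvd_diff snd_conv)
    qed
    ultimately show ?thesis unfolding mf_def by auto
  qed
  have inj: "inj_on mf Cl"
  proof
    fix x y assume "x \<in> Cl" "y \<in> Cl" "mf x = mf y"
    then show "x = y" using rep[of x] rep[of y] by (simp add: prod_eq_iff)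
  qed
  have fin: "finite Cl" using G unfolding Cl_def by simp
  define X where "X = 16 * (real N / 2) powr (- (2 * a))"
  have "(\<Sum>k'\<in>Cl. 1 / (freq_norm2 k' powr a)) \<le> (\<Sum>k'\<in>Cl. X * (fz (fst (mf k')) * fz (snd (mf k'))))"
  proof (rule sum_mono)
    fix k' assume kC: "k' \<in> Cl"
    show "1 / (freq_norm2 k' powr a) \<le> X * (fz (fst (mf k')) * fz (snd (mf k')))"
      unfolding X_def
    proof (rule pt_bound[OF N _ a])
      show "\<not> inS N k'" using kC out unfolding Cl_def by auto
      show "2 * \<bar>fst r\<bar> \<le> int N" "2 * \<bar>snd r\<bar> \<le> int N" unfolding r_def using rr_b by auto
    qed (use rep[OF kC] in auto)
  qed
  also have "\<dots> = X * (\<Sum>m\<in>mf ` Cl. fz (fst m) * fz (snd m))"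
    by (simp add: sum_distrib_left sum.reindex[OF inj])
  also have "\<dots> \<le> X * 9"
    by (rule mult_left_mono[OF fz2_sum_le]) (use fin in \<open>auto simp: X_def\<close>)
  finally show ?thesis unfolding Cl_def X_def by simp
qed

definition EE :: "nat \<Rightarrow> int \<Rightarrow> nat \<Rightarrow> complex" where
  "EE N z j = exp (\<i> * complex_of_real (real_of_int z * (real j * mesh N)))"

lemma EE_add: "EE N z (m + n) = EE N z m * EE N z n"
  unfolding EE_def by (simp add: distrib_left distrib_right exp_add[symmetric])

lemma exp_2pi_int: "exp (\<i> * complex_of_real (2 * pi * real_of_int m)) = 1"
  unfolding exp_eq_1 by (auto intro!: exI[of _ m])

lemma EE_Nq: assumes "N > 0" shows "EE N z (N * q) = 1"
proof -
  have "real_of_int z * (real (N * q) * mesh N) = 2 * pi * real_of_int (z * int q)"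
    using assms by (simp add: mesh_def field_simps)
  then show ?thesis unfolding EE_def by (simp only: exp_2pi_int)
qed

lemma EE_mod: assumes "N > 0" shows "EE N z (n mod N) = EE N z n"
proof -
  have "EE N z n = EE N z (n mod N + N * (n div N))" by simp
  also have "\<dots> = EE N z (n mod N)" by (simp only: EE_add EE_Nq[OF assms] mult_1_right)
  finally show ?thesis by simp
qed

lemma EE_pow: "EE N z j = (EE N z 1) ^ j"
  unfolding EE_def by (simp add: exp_of_nat_mult[symmetric] mult_ac)

lemma EE_cnj: "cnj (EE N z j) = EE N (- z) j"
  unfolding EE_def by (simp add: exp_cnj)

lemma EE_mul: "EE N z j * EE N z' j = EE N (z + z') j"
  unfolding EE_def by (simp add: exp_add[symmetric] distrib_left distrib_right)

lemma EE_norm [simp]: "norm (EE N z j) = 1"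
  unfolding EE_def by simp

lemma EE_eq1: assumes "N > 0" shows "EE N z 1 = 1 \<longleftrightarrow> int N dvd z"
proof
  assume "int N dvd z"
  then obtain q where "z = int N * q" by auto
  then have "real_of_int z * (real 1 * mesh N) = 2 * pi * real_of_int q"
    using assms by (simp add: mesh_def field_simps)
  then show "EE N z 1 = 1" unfolding EE_def by (simp only: exp_2pi_int)
next
  assume "EE N z 1 = 1"
  then obtain n :: int where n: "real_of_int z * (2 * pi / real N) = of_int (2 * n) * pi"
    unfolding EE_def exp_eq_1 by (auto simp: mesh_def)
  then have "real_of_int z = real_of_int n * real N" using assms
    by (simp add: field_simps)
  then have "z = n * int N" by (metis of_int_eq_iff of_int_mult of_int_of_nat_eq)
  then show "int N dvd z" by simp
qed

lemma EE_orth: assumes "N > 0"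
  shows "(\<Sum>j<N. EE N z j * cnj (EE N z' j)) = (if int N dvd (z - z') then of_nat N else 0)"
proof -
  have eq: "EE N z j * cnj (EE N z' j) = (EE N (z - z') 1) ^ j" for j
    using EE_pow[of N "z - z'" j] by (simp add: EE_cnj EE_mul)
  show ?thesis
  proof (cases "int N dvd (z - z')")
    case True
    then have "EE N (z - z') 1 = 1" using EE_eq1[OF assms] by simp
    then show ?thesis unfolding eq using True by simp
  next
    case False
    then have ne: "EE N (z - z') 1 \<noteq> 1" using EE_eq1[OF assms] by simp
    have "(EE N (z - z') 1) ^ N = 1" using EE_Nq[OF assms, of "z - z'" 1] EE_pow[of N "z - z'" N] by simp
    then have "(\<Sum>i<N. (EE N (z - z') 1) ^ i) = 0" by (simp only: geometric_sum[OF ne]) simp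
    then show ?thesis unfolding eq using False by (simp only: if_False)
  qed
qed

definition ee :: "nat \<Rightarrow> int \<times> int \<Rightarrow> nat \<Rightarrow> nat \<Rightarrow> complex" where
  "ee N k j1 j2 = EE N (fst k) j1 * EE N (snd k) j2"

definition mu :: "nat \<Rightarrow> int \<times> int \<Rightarrow> complex" where
  "mu N k = (EE N (fst k) 1 + EE N (fst k) (N - 1) + EE N (snd k) 1 + EE N (snd k) (N - 1) - 4)
             / complex_of_real ((mesh N)^2)"

lemma ee_form: "ee N k j1 j2 = exp (\<i> * complex_of_real (real_of_int (fst k) * (real j1 * mesh N) + real_of_int (snd k) * (real j2 * mesh N)))"
  unfolding ee_def EE_def by (simp add: exp_add[symmetric] distrib_left)

lemma mu_norm: "norm (mu N k) \<le> 8 / (mesh N)^2"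
proof -
  have "norm (EE N (fst k) 1 + EE N (fst k) (N - 1) + EE N (snd k) 1 + EE N (snd k) (N - 1) - 4) \<le>
        norm (EE N (fst k) 1) + norm (EE N (fst k) (N - 1)) + norm (EE N (snd k) 1) + norm (EE N (snd k) (N - 1)) + norm (4::complex)"
    by (intro order_trans[OF norm_triangle_ineq4] add_mono order_trans[OF norm_triangle_ineq] order_refl)
  then have "norm (EE N (fst k) 1 + EE N (fst k) (N - 1) + EE N (snd k) 1 + EE N (snd k) (N - 1) - 4) \<le> 8"
    by simp
  moreover have "cmod (complex_of_real ((mesh N)^2)) = (mesh N)^2" by (simp only: norm_of_real) simp
  ultimately show ?thesis unfolding mu_def norm_divide by (simp add: divide_right_mono)
qed

lemma shift_p: assumes "N > 0" shows "EE N z ((j + 1) mod N) = EE N z j * EE N z 1"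
  using EE_mod[OF assms] EE_add by metis

lemma shift_m: assumes "N > 0" shows "EE N z ((j + N - 1) mod N) = EE N z j * EE N z (N - 1)"
proof -
  have "j + N - 1 = j + (N - 1)" using assms by simp
  then show ?thesis using EE_mod[OF assms, of z "j + N - 1"] EE_add[of N z j "N - 1"] by simp
qed

lemma lap_sum: assumes "N > 0"
  shows "lap_h N (\<lambda>j1 j2. \<Sum>k\<in>F. d k * ee N k j1 j2) j1 j2 = (\<Sum>k\<in>F. d k * mu N k * ee N k j1 j2)"
proof -
  have "lap_h N (\<lambda>j1 j2. \<Sum>k\<in>F. d k * ee N k j1 j2) j1 j2 =
     (\<Sum>k\<in>F. d k * ((EE N (fst k) 1 + EE N (fst k) (N - 1) + EE N (snd k) 1 + EE N (snd k) (N - 1) - 4) * ee N k j1 j2))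
     / complex_of_real ((mesh N)^2)"
    unfolding lap_h_def ee_def shift_p[OF assms] shift_m[OF assms]
    by (simp add: sum.distrib[symmetric] sum_subtractf[symmetric] sum_distrib_left algebra_simps)
  also have "\<dots> = (\<Sum>k\<in>F. d k * mu N k * ee N k j1 j2)"
    unfolding mu_def sum_divide_distrib by (simp add: field_simps)
  finally show ?thesis .
qed

lemma grid_sq: assumes "N > 0"
  shows "(\<Sum>j1<N. \<Sum>j2<N. (cmod (\<Sum>k\<in>F. b k * ee N k j1 j2))^2)
     \<le> real N ^ 2 * (\<Sum>k\<in>F. \<Sum>k'\<in>F. if kcong N k k' then cmod (b k) * cmod (b k') else 0)"
proof -
  define S where "S j1 j2 = (\<Sum>k\<in>F. b k * ee N k j1 j2)" for j1 j2
  define T where "T k k' = (\<Sum>j1<N. \<Sum>j2<N. (EE N (fst k) j1 * cnj (EE N (fst k') j1)) * (EE N (snd k) j2 * cnj (EE N (snd k') j2)))" for k k'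
  have T_eq: "T k k' = (if kcong N k k' then of_nat N ^ 2 else 0)" for k k'
  proof -
    have "T k k' = (\<Sum>j1<N. EE N (fst k) j1 * cnj (EE N (fst k') j1)) * (\<Sum>j2<N. EE N (snd k) j2 * cnj (EE N (snd k') j2))"
      unfolding T_def by (simp add: sum_product)
    then show ?thesis unfolding EE_orth[OF assms] kcong_def by (simp add: power2_eq_square)
  qed
  have pt: "S j1 j2 * cnj (S j1 j2) = (\<Sum>k\<in>F. \<Sum>k'\<in>F. b k * cnj (b k') *
      ((EE N (fst k) j1 * cnj (EE N (fst k') j1)) * (EE N (snd k) j2 * cnj (EE N (snd k') j2))))" for j1 j2
    unfolding S_def cnj_sum sum_product ee_def by (intro sum.cong refl) (simp add: mult_ac)
  have "complex_of_real (\<Sum>j1<N. \<Sum>j2<N. (cmod (S j1 j2))^2) = (\<Sum>j1<N. \<Sum>j2<N. S j1 j2 * cnj (S j1 j2))"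
    by (simp only: of_real_sum complex_norm_square)
  also have "\<dots> = (\<Sum>k\<in>F. \<Sum>k'\<in>F. b k * cnj (b k') * T k k')"
    unfolding pt T_def sum_distrib_left
    by (subst sum.swap, subst (2) sum.swap, rule sum.cong[OF refl], subst sum.swap, subst (2) sum.swap) (rule refl)
  finally have eq: "complex_of_real (\<Sum>j1<N. \<Sum>j2<N. (cmod (S j1 j2))^2) = (\<Sum>k\<in>F. \<Sum>k'\<in>F. b k * cnj (b k') * T k k')" .
  have "(\<Sum>j1<N. \<Sum>j2<N. (cmod (S j1 j2))^2) = norm (complex_of_real (\<Sum>j1<N. \<Sum>j2<N. (cmod (S j1 j2))^2))"
    by (simp only: norm_of_real) (simp add: sum_nonneg)
  also have "\<dots> \<le> (\<Sum>k\<in>F. \<Sum>k'\<in>F. norm (b k * cnj (b k') * T k k'))"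
    unfolding eq by (intro order_trans[OF norm_sum] sum_mono order_trans[OF norm_sum] order_refl)
  also have "\<dots> = real N ^ 2 * (\<Sum>k\<in>F. \<Sum>k'\<in>F. if kcong N k k' then cmod (b k) * cmod (b k') else 0)"
    unfolding T_eq sum_distrib_left by (intro sum.cong refl) (simp add: norm_mult norm_power)
  finally show ?thesis unfolding S_def .
qed

lemma amgm_sum:
  fixes x W :: "int \<times> int \<Rightarrow> real" and R :: "int \<times> int \<Rightarrow> int \<times> int \<Rightarrow> bool"
  assumes W: "\<And>k. k \<in> F \<Longrightarrow> W k > 0" and sym: "\<And>k k'. R k k' \<longleftrightarrow> R k' k"
    and x: "\<And>k. x k \<ge> 0"
  shows "(\<Sum>k\<in>F. \<Sum>k'\<in>F. if R k k' then x k * x k' else 0)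
      \<le> (\<Sum>k\<in>F. x k ^ 2 * W k * (\<Sum>k'\<in>F. if R k k' then 1 / W k' else 0))"
proof -
  have pt: "(if R k k' then x k * x k' else 0) \<le>
      (if R k k' then x k ^ 2 * W k / W k' else 0) / 2 + (if R k' k then x k' ^ 2 * W k' / W k else 0) / 2"
    if "k \<in> F" "k' \<in> F" for k k'
  proof (cases "R k k'")
    case True
    have Wk: "W k > 0" "W k' > 0" using W that by auto
    have "0 \<le> (x k * W k - x k' * W k')^2" by simp
    then have "2 * (x k * x k') * (W k * W k') \<le> x k ^ 2 * W k * W k + x k' ^ 2 * W k' * W k'"
      by (simp add: power2_eq_square algebra_simps)
    then have "x k * x k' \<le> (x k ^ 2 * W k / W k') / 2 + (x k' ^ 2 * W k' / W k) / 2"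
      using Wk by (simp add: field_simps power2_eq_square)
    then show ?thesis using True sym by simp
  qed (use sym in simp)
  have "(\<Sum>k\<in>F. \<Sum>k'\<in>F. if R k k' then x k * x k' else 0)
     \<le> (\<Sum>k\<in>F. \<Sum>k'\<in>F. (if R k k' then x k ^ 2 * W k / W k' else 0) / 2 + (if R k' k then x k' ^ 2 * W k' / W k else 0) / 2)"
    by (intro sum_mono pt)
  also have "\<dots> = (\<Sum>k\<in>F. \<Sum>k'\<in>F. (if R k k' then x k ^ 2 * W k / W k' else 0)) / 2
      + (\<Sum>k\<in>F. \<Sum>k'\<in>F. (if R k' k then x k' ^ 2 * W k' / W k else 0)) / 2"
    by (simp add: sum.distrib sum_divide_distrib)
  also have "(\<Sum>k\<in>F. \<Sum>k'\<in>F. (if R k' k then x k' ^ 2 * W k' / W k else 0))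
     = (\<Sum>k\<in>F. \<Sum>k'\<in>F. (if R k k' then x k ^ 2 * W k / W k' else 0))"
    by (rule sum.swap)
  also have "(\<Sum>k\<in>F. \<Sum>k'\<in>F. (if R k k' then x k ^ 2 * W k / W k' else 0)) / 2
      + (\<Sum>k\<in>F. \<Sum>k'\<in>F. (if R k k' then x k ^ 2 * W k / W k' else 0)) / 2
      = (\<Sum>k\<in>F. x k ^ 2 * W k * (\<Sum>k'\<in>F. if R k k' then 1 / W k' else 0))"
  proof -
    have "(\<Sum>k\<in>F. \<Sum>k'\<in>F. (if R k k' then x k ^ 2 * W k / W k' else 0))
      = (\<Sum>k\<in>F. x k ^ 2 * W k * (\<Sum>k'\<in>F. if R k k' then 1 / W k' else 0))"
      unfolding sum_distrib_left by (intro sum.cong refl) simp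
    then show ?thesis by simp
  qed
  finally show ?thesis .
qed

definition Kc :: "real \<Rightarrow> real" where
  "Kc s = 64 * 144 * 2 powr (2 * s + 4) / (4 * pi^2)"

lemma const_lem:
  fixes s :: real and N :: nat
  assumes Npos: "N > 0"
  shows "(mesh N)^2 * (real N ^ 2 * (64 * 144 / (mesh N)^4) * (real N / 2) powr (- (2 * (s + 2)))) = Kc s * real N powr (- 2 * s)"
proof -
  have N0: "real N > 0" using Npos by simp
  have "(real N / 2) powr (- (2 * (s + 2))) = real N powr (- (2 * (s + 2))) / 2 powr (- (2 * (s + 2)))"
    using N0 by (simp add: powr_divide)
  also have "\<dots> = real N powr (- (2 * (s + 2))) * 2 powr (2 * s + 4)"
  proof -
    have "2 powr (- (2 * (s + 2))) = inverse (2 powr (2 * s + 4))"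
      by (simp add: powr_minus[symmetric] algebra_simps)
    then show ?thesis by (simp add: divide_inverse)
  qed
  also have "real N powr (- (2 * (s + 2))) = real N powr (- 2 * s) * real N powr (-4)"
    by (simp add: powr_add[symmetric] algebra_simps)
  also have "real N powr (-4) = 1 / real N ^ 4"
    using N0 by (simp add: powr_minus powr_numeral divide_inverse)
  finally have e: "(real N / 2) powr (- (2 * (s + 2))) = 2 powr (2 * s + 4) * (real N powr (- 2 * s) / real N ^ 4)"
    by simp
  show ?thesis unfolding e Kc_def mesh_def using N0
    by (simp add: field_simps power2_eq_square power4_eq_xxxx)
qed

lemma finite_bound_out:
  assumes N: "N > 2" "even N" and s: "s > 1" and F: "finite F" and out: "\<And>k. k \<in> F \<Longrightarrow> \<not> inS N k"
  shows "(norm_h N (lap_h N (\<lambda>j1 j2. \<Sum>k\<in>F. d k * ee N k j1 j2)))^2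
     \<le> Kc s * real N powr (- 2 * s) * (\<Sum>k\<in>F. freq_norm2 k powr (s + 2) * (cmod (d k))^2)"
proof -
  define a where "a = s + 2"
  define h where "h = mesh N"
  define W where "W k = freq_norm2 k powr a" for k
  define x where "x k = cmod (d k * mu N k)" for k
  have Npos: "N > 0" using N by simp
  have hpos: "h > 0" unfolding h_def mesh_def using Npos by simp
  have Wpos: "W k > 0" if "k \<in> F" for k
  proof -
    have "int N \<le> 2 * max \<bar>fst k\<bar> \<bar>snd k\<bar>" using out_big[OF N out[OF that]] .
    then have "fst k \<noteq> 0 \<or> snd k \<noteq> 0" using Npos by auto
    then have "freq_norm2 k > 0" unfolding freq_norm2_def by (auto simp: add_pos_nonneg add_nonneg_pos)
    then show ?thesis unfolding W_def by simp
  qed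
  have Wnn: "W k \<ge> 0" if "k \<in> F" for k using Wpos[OF that] by simp
  have sum_nn: "0 \<le> (\<Sum>k'\<in>F. if kcong N k k' then 1 / W k' else 0)" for k
    by (intro sum_nonneg) (auto simp: Wnn)
  have xb: "x k ^ 2 \<le> 64 / h^4 * (cmod (d k))^2" for k
  proof -
    have "x k \<le> cmod (d k) * (8 / h^2)" unfolding x_def norm_mult h_def
      by (rule mult_left_mono[OF mu_norm]) simp
    then have "x k ^ 2 \<le> (cmod (d k) * (8 / h^2))^2" by (rule power_mono) (simp add: x_def)
    also have "\<dots> = 64 / h^4 * (cmod (d k))^2" by (simp add: power_mult_distrib power_divide field_simps)
    finally show ?thesis .
  qed
  have cls: "(\<Sum>k'\<in>F. if kcong N k k' then 1 / W k' else 0) \<le> 144 * (real N / 2) powr (- (2 * a))" for k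
  proof -
    have "(\<Sum>k'\<in>F. if kcong N k k' then 1 / W k' else 0) = (\<Sum>k'\<in>{k'\<in>F. kcong N k k'}. 1 / W k')"
      using F by (simp add: sum.inter_filter)
    also have "\<dots> \<le> 144 * (real N / 2) powr (- (2 * a))"
      unfolding W_def by (rule class_bound[OF N _ F out]) (use s in \<open>simp add: a_def\<close>)
    finally show ?thesis .
  qed
  define Q where "Q = (\<Sum>j1<N. \<Sum>j2<N. (cmod (lap_h N (\<lambda>j1 j2. \<Sum>k\<in>F. d k * ee N k j1 j2) j1 j2))^2)"
  have "Q = (\<Sum>j1<N. \<Sum>j2<N. (cmod (\<Sum>k\<in>F. (d k * mu N k) * ee N k j1 j2))^2)"
    unfolding Q_def lap_sum[OF Npos] ..
  also have "\<dots> \<le> real N ^ 2 * (\<Sum>k\<in>F. \<Sum>k'\<in>F. if kcong N k k' then x k * x k' else 0)"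
    unfolding x_def by (rule grid_sq[OF Npos])
  also have "\<dots> \<le> real N ^ 2 * (\<Sum>k\<in>F. x k ^ 2 * W k * (\<Sum>k'\<in>F. if kcong N k k' then 1 / W k' else 0))"
    by (intro mult_left_mono amgm_sum Wpos) (auto simp: kcong_def x_def dvd_diff_commute)
  also have "\<dots> \<le> real N ^ 2 * (\<Sum>k\<in>F. (64 / h^4 * (cmod (d k))^2) * W k * (144 * (real N / 2) powr (- (2 * a))))"
    by (intro mult_left_mono sum_mono mult_mono xb cls) (auto simp: Wnn sum_nn)
  also have "\<dots> = real N ^ 2 * (64 * 144 / h^4) * (real N / 2) powr (- (2 * a)) * (\<Sum>k\<in>F. freq_norm2 k powr (s + 2) * (cmod (d k))^2)"
    unfolding W_def a_def sum_distrib_left by (intro sum.cong refl) (simp add: mult_ac)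
  finally have Qb: "Q \<le> real N ^ 2 * (64 * 144 / h^4) * (real N / 2) powr (- (2 * a)) * (\<Sum>k\<in>F. freq_norm2 k powr (s + 2) * (cmod (d k))^2)" .
  have nh: "(norm_h N (lap_h N (\<lambda>j1 j2. \<Sum>k\<in>F. d k * ee N k j1 j2)))^2 = h^2 * Q"
    unfolding norm_h_def Q_def h_def by (simp add: sum_nonneg)
  define SS where "SS = (\<Sum>k\<in>F. freq_norm2 k powr (s + 2) * (cmod (d k))^2)"
  define A where "A = real N ^ 2 * (64 * 144 / h^4) * (real N / 2) powr (- (2 * a))"
  have "h^2 * Q \<le> h^2 * (A * SS)" unfolding A_def SS_def by (rule mult_left_mono[OF Qb]) simp
  also have "\<dots> = (h^2 * A) * SS" by (simp only: mult.assoc)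
  also have "h^2 * A = Kc s * real N powr (- 2 * s)" unfolding A_def h_def a_def by (rule const_lem[OF Npos])
  finally show ?thesis unfolding nh SS_def .
qed

lemma finite_bound:
  assumes N: "N > 2" "even N" and s: "s > 1" and F: "finite F" and dS: "\<And>k. inS N k \<Longrightarrow> d k = 0"
  shows "norm_h N (lap_h N (\<lambda>j1 j2. \<Sum>k\<in>F. d k * ee N k j1 j2))
     \<le> sqrt (Kc s * real N powr (- 2 * s) * (\<Sum>k\<in>F. freq_norm2 k powr (s + 2) * (cmod (d k))^2))"
proof -
  define G where "G = {k\<in>F. \<not> inS N k}"
  have GF: "G \<subseteq> F" and finG: "finite G" using F unfolding G_def by auto
  have e1: "(\<lambda>j1 j2. \<Sum>k\<in>F. d k * ee N k j1 j2) = (\<lambda>j1 j2. \<Sum>k\<in>G. d k * ee N k j1 j2)"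
    by (intro ext sum.mono_neutral_right[OF F GF]) (auto simp: G_def dS)
  have e2: "(\<Sum>k\<in>F. freq_norm2 k powr (s + 2) * (cmod (d k))^2) = (\<Sum>k\<in>G. freq_norm2 k powr (s + 2) * (cmod (d k))^2)"
    by (intro sum.mono_neutral_right[OF F GF]) (auto simp: G_def dS)
  have sq: "(norm_h N (lap_h N (\<lambda>j1 j2. \<Sum>k\<in>G. d k * ee N k j1 j2)))^2
     \<le> Kc s * real N powr (- 2 * s) * (\<Sum>k\<in>G. freq_norm2 k powr (s + 2) * (cmod (d k))^2)"
    by (rule finite_bound_out[OF N s finG]) (auto simp: G_def)
  have nn: "norm_h N U \<ge> 0" for U unfolding norm_h_def by (simp add: sum_nonneg)
  show ?thesis unfolding e1 e2
    using real_sqrt_le_mono[OF sq] nn by simp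
qed

lemma sq_help: "(1 + \<bar>t\<bar>)^2 / 2 \<le> 1 + t^2" for t :: real
proof -
  have e1: "(1 + \<bar>t\<bar>)^2 = 1 + 2 * \<bar>t\<bar> + t^2" by (simp add: power2_eq_square algebra_simps)
  have e2: "(\<bar>t\<bar> - 1)^2 = t^2 - 2 * \<bar>t\<bar> + 1" by (simp add: power2_eq_square algebra_simps)
  have "0 \<le> (\<bar>t\<bar> - 1)^2" by simp
  then show ?thesis using e1 e2 by linarith
qed

lemma fz_bound2: "(1 + freq_norm2 k) powr (- a) \<le> 4 * (fz (fst k) * fz (snd k))" if "a \<ge> 2" for k :: "int \<times> int" and a :: real
proof -
  define x where "x = real_of_int (fst k)"
  define y where "y = real_of_int (snd k)"
  have f: "freq_norm2 k = x^2 + y^2" unfolding freq_norm2_def x_def y_def by simp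
  have "(1 + freq_norm2 k) powr (- a) \<le> (1 + freq_norm2 k) powr (- 2)"
    by (rule powr_mono) (use that in \<open>auto simp: f\<close>)
  also have "\<dots> = 1 / (1 + x^2 + y^2)^2"
    unfolding f by (simp add: powr_minus powr_numeral divide_inverse add.assoc)
  also have "\<dots> \<le> 1 / ((1 + x^2) * (1 + y^2))"
  proof (rule divide_left_mono)
    have "(1 + X) * (1 + Y) \<le> (1 + X + Y)^2" if "X \<ge> 0" "Y \<ge> 0" for X Y :: real
    proof -
      have "(1 + X + Y)^2 - (1 + X) * (1 + Y) = X + Y + X * X + X * Y + Y * Y"
        by (simp add: power2_eq_square algebra_simps)
      also have "\<dots> \<ge> 0" using that by (intro add_nonneg_nonneg mult_nonneg_nonneg) auto
      finally show ?thesis by simp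
    qed
    then show "(1 + x^2) * (1 + y^2) \<le> (1 + x^2 + y^2)^2" by simp
  next
    have "x^2 \<ge> 0" "y^2 \<ge> 0" by simp_all
    then have "1 + x^2 + y^2 > 0" "1 + x^2 > 0" "1 + y^2 > 0" by linarith+
    then show "0 < (1 + x^2 + y^2)^2 * ((1 + x^2) * (1 + y^2))" by (intro mult_pos_pos) auto
  qed simp
  also have "\<dots> \<le> 1 / ((1 + \<bar>x\<bar>)^2 / 2 * ((1 + \<bar>y\<bar>)^2 / 2))"
  proof (rule divide_left_mono)
    have a: "(1 + \<bar>x\<bar>)^2 / 2 \<le> 1 + x^2" "(1 + \<bar>y\<bar>)^2 / 2 \<le> 1 + y^2"
      by (rule sq_help)+
    show "(1 + \<bar>x\<bar>)^2 / 2 * ((1 + \<bar>y\<bar>)^2 / 2) \<le> (1 + x^2) * (1 + y^2)"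
      by (intro mult_mono a) auto
  qed (auto intro!: mult_pos_pos add_pos_nonneg)
  also have "\<dots> = 4 * (fz (fst k) * fz (snd k))"
    unfolding fz_def x_def y_def by (simp add: field_simps)
  finally show ?thesis .
qed

lemma tail_summable: assumes "a \<ge> 2" shows "(\<lambda>k. (1 + freq_norm2 k) powr (- a)) summable_on UNIV"
proof (rule nonneg_bdd_above_summable_on)
  show "bdd_above (sum (\<lambda>k. (1 + freq_norm2 k) powr (- a)) ` {F. F \<subseteq> UNIV \<and> finite F})"
  proof (rule bdd_aboveI2)
    fix F :: "(int \<times> int) set" assume "F \<in> {F. F \<subseteq> UNIV \<and> finite F}"
    then have fin: "finite F" by simp
    have "(\<Sum>k\<in>F. (1 + freq_norm2 k) powr (- a)) \<le> (\<Sum>k\<in>F. 4 * (fz (fst k) * fz (snd k)))"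
      by (intro sum_mono fz_bound2 assms)
    also have "\<dots> = 4 * (\<Sum>k\<in>F. fz (fst k) * fz (snd k))" by (simp add: sum_distrib_left)
    also have "\<dots> \<le> 4 * 9" using fz2_sum_le[OF fin] by simp
    finally show "(\<Sum>k\<in>F. (1 + freq_norm2 k) powr (- a)) \<le> 36" by simp
  qed
qed simp

lemma freq_nn: "freq_norm2 k \<ge> 0" unfolding freq_norm2_def by simp

lemma coef_abs_summable:
  assumes s: "s > 1" and c: "in_Hp (s + 2) c"
  shows "(\<lambda>k. cmod (c k)) summable_on UNIV"
proof (rule summable_on_comparison_test)
  define A where "A k = (1 + freq_norm2 k) powr (s + 2)" for k
  have Apos: "A k > 0" for k unfolding A_def using freq_nn[of k] by simp
  show "(\<lambda>k. ((1 + freq_norm2 k) powr (s + 2) * (cmod (c k))^2 + (1 + freq_norm2 k) powr (- (s + 2))) / 2) summable_on UNIV"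
  proof -
    have "(\<lambda>k. ((1 + freq_norm2 k) powr (s + 2) * (cmod (c k))^2 + (1 + freq_norm2 k) powr (- (s + 2))) * (1/2)) summable_on UNIV"
      using s by (intro summable_on_cmult_left summable_on_add[OF c[unfolded in_Hp_def] tail_summable]) simp
    then show ?thesis by simp
  qed
  fix k
  have "(1 + freq_norm2 k) powr (- (s + 2)) = 1 / A k"
    unfolding A_def by (simp only: powr_minus) (simp add: divide_inverse)
  moreover have "cmod (c k) \<le> (A k * (cmod (c k))^2 + 1 / A k) / 2"
  proof -
    have "0 \<le> (A k * cmod (c k) - 1)^2" by simp
    then have "2 * A k * cmod (c k) \<le> (A k * cmod (c k))^2 + 1" by (simp add: power2_eq_square algebra_simps)
    then show ?thesis using Apos[of k] by (simp add: field_simps power2_eq_square)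
  qed
  ultimately show "cmod (c k) \<le> ((1 + freq_norm2 k) powr (s + 2) * (cmod (c k))^2 + (1 + freq_norm2 k) powr (- (s + 2))) / 2"
    unfolding A_def by simp
qed simp

lemma norm_lap_tendsto:
  assumes "\<And>j1 j2. ((\<lambda>F. V F j1 j2) \<longlongrightarrow> U j1 j2) net"
  shows "((\<lambda>F. norm_h N (lap_h N (V F))) \<longlongrightarrow> norm_h N (lap_h N U)) net"
proof -
  have L: "((\<lambda>F. lap_h N (V F) j1 j2) \<longlongrightarrow> lap_h N U j1 j2) net" for j1 j2
    unfolding lap_h_def divide_inverse
    by (intro tendsto_mult_right tendsto_diff tendsto_add tendsto_mult_left assms)
  show ?thesis unfolding norm_h_def
    by (intro tendsto_real_sqrt tendsto_mult_left tendsto_sum tendsto_power tendsto_norm L)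
qed

lemma proj_eq: "proj_N (N - 2) c k = (if inS N k then c k else 0)"
  unfolding proj_N_def inS_def by simp

theorem lemma4p6:
  fixes s :: real
  assumes "s > 1"
  shows "\<exists>C. \<forall>(N::nat) (c::int \<times> int \<Rightarrow> complex).
           N > 2 \<longrightarrow> even N \<longrightarrow> in_Hp (s + 2) c \<longrightarrow>
           norm_h N (lap_h N (\<lambda>j1 j2. grid_vals N (fourier_fun (proj_N (N - 2) c)) j1 j2
                                      - grid_vals N (fourier_fun c) j1 j2))
             \<le> C * real N powr (- s) * Hp_semi (s + 2) c"
proof (intro exI allI impI)
  fix N :: nat and c :: "int \<times> int \<Rightarrow> complex"
  assume N: "N > 2" "even N" and c: "in_Hp (s + 2) c"
  define d where "d k = proj_N (N - 2) c k - c k" for k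
  have dS: "d k = 0" if "inS N k" for k using that unfolding d_def proj_eq by simp
  have dc: "cmod (d k) \<le> cmod (c k)" for k unfolding d_def proj_eq by simp
  define U where "U = (\<lambda>j1 j2. grid_vals N (fourier_fun (proj_N (N - 2) c)) j1 j2 - grid_vals N (fourier_fun c) j1 j2)"
  have abs_c: "(\<lambda>k. cmod (c k)) summable_on UNIV" by (rule coef_abs_summable[OF assms c])
  have sum_g: "(\<lambda>k. g k * ee N k j1 j2) summable_on UNIV" if "\<And>k. cmod (g k) \<le> cmod (c k)" for g j1 j2
  proof (rule abs_summable_summable)
    show "(\<lambda>k. norm (g k * ee N k j1 j2)) summable_on UNIV"
      by (rule summable_on_comparison_test[OF abs_c]) (auto simp: norm_mult ee_def that)
  qed
  have gv: "grid_vals N (fourier_fun g) j1 j2 = infsum (\<lambda>k. g k * ee N k j1 j2) UNIV" for g j1 j2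
    unfolding grid_vals_def fourier_fun_def ee_form ..
  have conv: "((\<lambda>F. \<Sum>k\<in>F. d k * ee N k j1 j2) \<longlongrightarrow> U j1 j2) (finite_subsets_at_top UNIV)" for j1 j2
  proof -
    have p: "cmod (proj_N (N - 2) c k) \<le> cmod (c k)" for k unfolding proj_eq by simp
    have t1: "((\<lambda>F. \<Sum>k\<in>F. proj_N (N - 2) c k * ee N k j1 j2) \<longlongrightarrow> grid_vals N (fourier_fun (proj_N (N - 2) c)) j1 j2) (finite_subsets_at_top UNIV)"
      unfolding gv using has_sum_infsum[OF sum_g[OF p]] unfolding has_sum_def .
    have t2: "((\<lambda>F. \<Sum>k\<in>F. c k * ee N k j1 j2) \<longlongrightarrow> grid_vals N (fourier_fun c) j1 j2) (finite_subsets_at_top UNIV)"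
      unfolding gv using has_sum_infsum[OF sum_g[of c]] unfolding has_sum_def by simp
    show ?thesis unfolding U_def d_def using tendsto_diff[OF t1 t2]
      by (simp add: sum_subtractf[symmetric] left_diff_distrib)
  qed
  define I where "I = infsum (\<lambda>k. freq_norm2 k powr (s + 2) * (cmod (c k))^2) UNIV"
  have sumW: "(\<lambda>k. freq_norm2 k powr (s + 2) * (cmod (c k))^2) summable_on UNIV"
  proof (rule summable_on_comparison_test[OF c[unfolded in_Hp_def]])
    fix k
    show "freq_norm2 k powr (s + 2) * (cmod (c k))^2 \<le> (1 + freq_norm2 k) powr (s + 2) * (cmod (c k))^2"
      by (intro mult_right_mono powr_mono2) (use assms freq_nn[of k] in auto)
  qed simp
  define B where "B = sqrt (Kc s * real N powr (- 2 * s) * I)"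
  have Kc_nn: "Kc s \<ge> 0" unfolding Kc_def by simp
  have ev: "\<forall>\<^sub>F F in finite_subsets_at_top UNIV. norm_h N (lap_h N (\<lambda>j1 j2. \<Sum>k\<in>F. d k * ee N k j1 j2)) \<le> B"
  proof (rule eventually_finite_subsets_at_top_weakI)
    fix F :: "(int \<times> int) set" assume F: "finite F"
    have "norm_h N (lap_h N (\<lambda>j1 j2. \<Sum>k\<in>F. d k * ee N k j1 j2))
      \<le> sqrt (Kc s * real N powr (- 2 * s) * (\<Sum>k\<in>F. freq_norm2 k powr (s + 2) * (cmod (d k))^2))"
      by (rule finite_bound[OF N assms F dS])
    also have "\<dots> \<le> B" unfolding B_def
    proof (intro real_sqrt_le_mono mult_left_mono)
      have "(\<Sum>k\<in>F. freq_norm2 k powr (s + 2) * (cmod (d k))^2) \<le> (\<Sum>k\<in>F. freq_norm2 k powr (s + 2) * (cmod (c k))^2)"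
        by (intro sum_mono mult_left_mono power_mono dc) auto
      also have "\<dots> \<le> I" unfolding I_def
        by (rule finite_sum_le_infsum[OF sumW F]) auto
      finally show "(\<Sum>k\<in>F. freq_norm2 k powr (s + 2) * (cmod (d k))^2) \<le> I" .
    qed (use Kc_nn in auto)
    finally show "norm_h N (lap_h N (\<lambda>j1 j2. \<Sum>k\<in>F. d k * ee N k j1 j2)) \<le> B" .
  qed
  have lim: "norm_h N (lap_h N U) \<le> B"
    by (rule tendsto_le[OF finite_subsets_at_top_neq_bot tendsto_const norm_lap_tendsto[OF conv] ev])
  have Npos: "real N > 0" using N by simp
  have "B = sqrt (Kc s / (4 * pi^2)) * real N powr (- s) * Hp_semi (s + 2) c"
  proof -
    have "real N powr (- 2 * s) = (real N powr (- s))^2"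
      using Npos by (simp add: powr_powr[symmetric] powr_realpow[symmetric] power2_eq_square powr_add[symmetric])
    then have sq: "sqrt (real N powr (- 2 * s)) = real N powr (- s)" by simp
    have e:  "Kc s / (4 * pi^2) * real N powr (- 2 * s) * (4 * pi^2 * I) = Kc s * real N powr (- 2 * s) * I"
      by simp
    have "sqrt (Kc s / (4 * pi^2)) * real N powr (- s) * sqrt (4 * pi^2 * I)
        = sqrt (Kc s / (4 * pi^2) * real N powr (- 2 * s) * (4 * pi^2 * I))"
      unfolding real_sqrt_mult sq ..
    then show ?thesis unfolding B_def Hp_semi_def I_def[symmetric] e by simp
  qed
  then show "norm_h N (lap_h N (\<lambda>j1 j2. grid_vals N (fourier_fun (proj_N (N - 2) c)) j1 j2
                                      - grid_vals N (fourier_fun c) j1 j2))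
             \<le> sqrt (Kc s / (4 * pi^2)) * real N powr (- s) * Hp_semi (s + 2) c"
    using lim unfolding U_def by simp
qed

end
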